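(* Let $(U,V)$ be a one-dimensional robot game. (1) If $\max(V)\ge -\min(U)$, then every positive counter value is losing. Similarly, if $\min(V)\le -\max(U)$, then every negative counter value is losing. (2) If $\max(U)>-\min(V)$ and there exists a bound $B\in\mathbb{Z}$ such that every counter value greater than $B$ is winning, then every counter value is winning. Similarly, if $\min(U)<-\max(V)$ and there exists a bound $B$ such that every counter value less than $B$ is winning, then every counter value is winning.
   Context: A robot game in dimension one is a pair $(U,V)$ of finite nonempty subsets of $\mathbb{Z}$; $U$ belongs to the reacher and $V$ to the opponent. From an initial counter value $x_0\in\mathbb{Z}$, a play proceeds in rounds: in a round starting at counter value $x$, the opponent chooses $v\in V$ and the counter becomes $x+v$, then the reacher chooses $u\in U$ and the counter becomes $x+v+u$, where the round ends. The reacher wins the play if some round ends at $0$; by convention the reacher wins immediately if the play starts at $0$. Strategies are functions from play prefixes to moves. A counter value $x$ is winning if the reacher has a strategy such that against every opponent strategy the play from $x$ is won by the reacher; it is losing if the opponent has a strategy such that against every reacher strategy the play from $x$ is not won by the reacher. "Positive" and "negative" mean strictly positive and strictly negative. *)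

theory Defs
  imports Main
begin

text \<open>A play prefix is the list of counter values visited so far (starting with the
initial value, then alternating: after the opponent's move, after the reacher's move).\<close>

fun hist :: "(int list \<Rightarrow> int) \<Rightarrow> (int list \<Rightarrow> int) \<Rightarrow> int \<Rightarrow> nat \<Rightarrow> int list" where
  "hist opp reach x0 0 = [x0]"
| "hist opp reach x0 (Suc n) =
     (let h = hist opp reach x0 n;
          y = last h + opp h;
          h' = h @ [y]
      in h' @ [y + reach h'])"

definition reacher_wins :: "(int list \<Rightarrow> int) \<Rightarrow> (int list \<Rightarrow> int) \<Rightarrow> int \<Rightarrow> bool" where
  "reacher_wins opp reach x0 \<longleftrightarrow> (\<exists>n. last (hist opp reach x0 n) = 0)"

definition strategy_in :: "int set \<Rightarrow> (int list \<Rightarrow> int) \<Rightarrow> bool" where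
  "strategy_in M s \<longleftrightarrow> (\<forall>h. s h \<in> M)"

definition winning :: "int set \<Rightarrow> int set \<Rightarrow> int \<Rightarrow> bool" where
  "winning U V x \<longleftrightarrow>
     (\<exists>reach. strategy_in U reach \<and>
        (\<forall>opp. strategy_in V opp \<longrightarrow> reacher_wins opp reach x))"

definition losing :: "int set \<Rightarrow> int set \<Rightarrow> int \<Rightarrow> bool" where
  "losing U V x \<longleftrightarrow>
     (\<exists>opp. strategy_in V opp \<and>
        (\<forall>reach. strategy_in U reach \<longrightarrow> \<not> reacher_wins opp reach x))"

end

theory Submission
  imports Defs
begin

lemma hist_Suc': "hist opp reach x (Suc n) = hist opp reach x n @ [last (hist opp reach x n) + opp (hist opp reach x n),
   last (hist opp reach x n) + opp (hist opp reach x n) + reach (hist opp reach x n @ [last (hist opp reach x n) + opp (hist opp reach x n)])]"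
  by (simp add: Let_def)

lemma hist_len: "length (hist opp reach x n) = 2*n+1"
  by (induction n) (simp_all add: hist_Suc' del: hist.simps(2))

lemma hist_ne: "hist opp reach x n \<noteq> []"
  using hist_len[of opp reach x n] by auto

lemma hist_take: "k \<le> n \<Longrightarrow> take (2*k+1) (hist opp reach x n) = hist opp reach x k"
proof (induction n)
  case 0 then show ?case by (simp add: hist_len)
next
  case (Suc n)
  show ?case
  proof (cases "k = Suc n")
    case True then show ?thesis using hist_len[of opp reach x "Suc n"] by simp
  next
    case False
    then have "k \<le> n" using Suc by simp
    have "take (2*k+1) (hist opp reach x (Suc n)) = take (2*k+1) (hist opp reach x n)"
      using \<open>k \<le> n\<close> hist_len[of opp reach x n] by (simp only: hist_Suc' take_append) simp
    then show ?thesis using Suc.IH \<open>k \<le> n\<close> by simp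
  qed
qed

lemma hist_nth: "k \<le> n \<Longrightarrow> hist opp reach x n ! (2*k) = last (hist opp reach x k)"
proof -
  assume kn: "k \<le> n"
  have "hist opp reach x n ! (2*k) = take (2*k+1) (hist opp reach x n) ! (2*k)"
    by (simp only: nth_take lessI add_Suc_right add_0_right)
  also have "\<dots> = hist opp reach x k ! (2*k)" using hist_take[OF kn] by simp
  also have "\<dots> = last (hist opp reach x k)"
    using hist_len[of opp reach x k] hist_ne[of opp reach x k] by (simp add: last_conv_nth)
  finally show ?thesis .
qed

lemma hist_hd: "hd (hist opp reach x n) = x"
  by (induction n) (simp_all add: hist_Suc' hist_ne del: hist.simps(2))

lemma hist_shift:
  fixes opp reach x0 m
  defines "P \<equiv> butlast (hist opp reach x0 m)"
  assumes "\<forall>h. h \<noteq> [] \<and> hd h = last (hist opp reach x0 m) \<longrightarrow> reach (P @ h) = \<sigma> h"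
  shows "hist opp reach x0 (m+n) = P @ hist (\<lambda>h. opp (P @ h)) \<sigma> (last (hist opp reach x0 m)) n"
proof (induction n)
  case 0 then show ?case by (simp add: P_def hist_ne)
next
  case (Suc n)
  let ?h2 = "hist (\<lambda>h. opp (P @ h)) \<sigma> (last (hist opp reach x0 m)) n"
  let ?y = "last ?h2 + opp (P @ ?h2)"
  have ne: "?h2 \<noteq> []" by (rule hist_ne)
  have "reach (P @ ?h2 @ [?y]) = \<sigma> (?h2 @ [?y])"
  proof -
    have "?h2 @ [?y] \<noteq> []" by simp
    moreover have "hd (?h2 @ [?y]) = last (hist opp reach x0 m)" using ne by (simp add: hist_hd)
    ultimately show ?thesis using assms(2) by blast
  qed
  moreover have "last (P @ ?h2) = last ?h2" using ne by simp
  ultimately show ?case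
    using Suc.IH by (simp only: add_Suc_right hist_Suc') simp
qed

definition comb :: "int \<Rightarrow> int \<Rightarrow> (int \<Rightarrow> int list \<Rightarrow> int) \<Rightarrow> int list \<Rightarrow> int" where
  "comb B u0 \<sigma> h = (if \<exists>k. 2*k < length h \<and> h!(2*k) > B
     then (let k = LEAST k. 2*k < length h \<and> h!(2*k) > B in \<sigma> (h!(2*k)) (drop (2*k) h)) else u0)"

lemma stitch:
  assumes u0: "u0 \<in> U" and step: "\<forall>v\<in>V. v + u0 \<ge> 1" and W: "\<forall>x>B. winning U V x"
  shows "winning U V x0"
proof -
  define \<sigma> where "\<sigma> x = (SOME r. strategy_in U r \<and> (\<forall>opp. strategy_in V opp \<longrightarrow> reacher_wins opp r x))" for x
  have \<sigma>: "strategy_in U (\<sigma> x) \<and> (\<forall>opp. strategy_in V opp \<longrightarrow> reacher_wins opp (\<sigma> x) x)" if xB: "x > B" for x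
  proof -
    obtain r where "strategy_in U r \<and> (\<forall>opp. strategy_in V opp \<longrightarrow> reacher_wins opp r x)"
      using W xB unfolding winning_def by blast
    then show ?thesis unfolding \<sigma>_def by (rule someI[where P="\<lambda>r. strategy_in U r \<and> (\<forall>opp. strategy_in V opp \<longrightarrow> reacher_wins opp r x)"])
  qed
  define reach where "reach = comb B u0 \<sigma>"
  have sU: "strategy_in U reach"
    unfolding strategy_in_def
  proof
    fix h
    show "reach h \<in> U"
    proof (cases "\<exists>k. 2*k < length h \<and> h!(2*k) > B")
      case True
      let ?k = "LEAST k. 2*k < length h \<and> h!(2*k) > B"
      have "2*?k < length h \<and> h!(2*?k) > B" using True by (rule LeastI_ex)
      then show ?thesis using True \<sigma>[of "h!(2*?k)"] unfolding reach_def comb_def strategy_in_def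
        by (simp add: Let_def)
    next
      case False then show ?thesis using u0 unfolding reach_def comb_def by (auto simp: Let_def)
    qed
  qed
  have "reacher_wins opp reach x0" if oV: "strategy_in V opp" for opp
  proof -
    define R where "R n = last (hist opp reach x0 n)" for n
    have ex: "\<exists>n. R n > B"
    proof (rule ccontr)
      assume "\<not> ?thesis"
      then have le: "\<forall>n. R n \<le> B" using not_less by blast
      have "R n \<ge> x0 + int n" for n
      proof (induction n)
        case 0 then show ?case by (simp add: R_def)
      next
        case (Suc n)
        let ?H = "hist opp reach x0 n"
        let ?y = "last ?H + opp ?H"
        have "\<not> (\<exists>k. 2*k < length (?H @ [?y]) \<and> (?H @ [?y])!(2*k) > B)"
        proof
          assume "\<exists>k. 2*k < length (?H @ [?y]) \<and> (?H @ [?y])!(2*k) > B"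
          then obtain k where k: "2*k < length (?H @ [?y])" "(?H @ [?y])!(2*k) > B" by blast
          then have kn: "k \<le> n" by (simp add: hist_len)
          then have "(?H @ [?y])!(2*k) = R k" by (simp add: nth_append hist_len hist_nth R_def)
          then show False using k(2) le[rule_format, of k] by simp
        qed
        then have "reach (?H @ [?y]) = u0" unfolding reach_def comb_def by (rule if_not_P)
        moreover have "opp ?H + u0 \<ge> 1" using oV step unfolding strategy_in_def by blast
        ultimately show ?case using Suc unfolding R_def by (simp only: hist_Suc') simp
      qed
      from this[of "nat (B - x0 + 1)"] le[rule_format, of "nat (B - x0 + 1)"] show False by linarith
    qed
    define m where "m = (LEAST n. R n > B)"
    have Rm: "R m > B" unfolding m_def using ex by (rule LeastI_ex)
    have Rlt: "R k \<le> B" if "k < m" for k using not_less_Least[of k "\<lambda>n. R n > B"] that unfolding m_def by simp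
    define P where "P = butlast (hist opp reach x0 m)"
    have lenP: "length P = 2*m" unfolding P_def by (simp add: hist_len)
    have agree: "\<forall>h. h \<noteq> [] \<and> hd h = last (hist opp reach x0 m) \<longrightarrow> reach (P @ h) = \<sigma> (R m) h"
    proof (intro allI impI)
      fix h assume h: "h \<noteq> [] \<and> hd h = last (hist opp reach x0 m)"
      let ?L = "P @ h"
      have h0: "h!0 = R m" using h unfolding R_def by (metis hd_conv_nth)
      have Lm: "?L!(2*m) = R m" using h0 lenP by (simp add: nth_append)
      have Lk: "?L!(2*k) = R k" if "k < m" for k
      proof -
        have "?L!(2*k) = P!(2*k)" using that lenP by (simp add: nth_append)
        also have "\<dots> = hist opp reach x0 m ! (2*k)" unfolding P_def using that
          by (simp add: nth_butlast hist_len)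
        also have "\<dots> = R k" using that by (simp add: hist_nth R_def)
        finally show ?thesis .
      qed
      have c: "2*m < length ?L \<and> ?L!(2*m) > B" using h lenP Lm Rm by simp
      have least: "(LEAST k. 2*k < length ?L \<and> ?L!(2*k) > B) = m"
      proof (rule Least_equality)
        show "2*m < length ?L \<and> ?L!(2*m) > B" by (rule c)
      next
        fix y assume "2*y < length ?L \<and> ?L!(2*y) > B"
        then show "m \<le> y" using Lk[of y] Rlt[of y] by (metis leI not_le)
      qed
      have "drop (2*m) ?L = h" using lenP by simp
      then show "reach ?L = \<sigma> (R m) h" using c least Lm unfolding reach_def comb_def
        by (auto simp: Let_def)
    qed
    have sh: "hist opp reach x0 (m+n) = P @ hist (\<lambda>h. opp (P @ h)) (\<sigma> (R m)) (R m) n" for n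
      using hist_shift[of opp reach x0 m "\<sigma> (R m)" n] agree unfolding P_def R_def by simp
    have "strategy_in V (\<lambda>h. opp (P @ h))" using oV unfolding strategy_in_def by simp
    then have "reacher_wins (\<lambda>h. opp (P @ h)) (\<sigma> (R m)) (R m)" using \<sigma>[OF Rm] by blast
    then obtain n where "last (hist (\<lambda>h. opp (P @ h)) (\<sigma> (R m)) (R m) n) = 0"
      unfolding reacher_wins_def by blast
    then have "last (hist opp reach x0 (m+n)) = 0" using sh hist_ne by simp
    then show ?thesis unfolding reacher_wins_def by blast
  qed
  then show ?thesis using sU unfolding winning_def by blast
qed

definition mir :: "(int list \<Rightarrow> int) \<Rightarrow> int list \<Rightarrow> int" where
  "mir s h = - s (map uminus h)"

lemma mir_mir: "mir (mir s) = s"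
  by (rule ext) (simp add: mir_def comp_def)

lemma hist_mir: "hist (mir opp) (mir reach) (-x) n = map uminus (hist opp reach x n)"
  by (induction n) (simp_all add: Let_def mir_def last_map hist_ne comp_def add.commute)

lemma win_mir:
  assumes "winning U V x" shows "winning (uminus ` U) (uminus ` V) (-x)"
proof -
  obtain r where r: "strategy_in U r" "\<forall>opp. strategy_in V opp \<longrightarrow> reacher_wins opp r x"
    using assms unfolding winning_def by blast
  have "strategy_in (uminus ` U) (mir r)" using r(1) unfolding strategy_in_def mir_def by auto
  moreover have "reacher_wins opp (mir r) (-x)" if oV: "strategy_in (uminus ` V) opp" for opp
  proof -
    have "strategy_in V (mir opp)" unfolding strategy_in_def mir_def
    proof
      fix h
      obtain v where "v \<in> V" "opp (map uminus h) = - v" using oV unfolding strategy_in_def by blast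
      then show "- opp (map uminus h) \<in> V" by simp
    qed
    then obtain n where "last (hist (mir opp) r x n) = 0" using r(2) unfolding reacher_wins_def by blast
    then have "last (hist (mir (mir opp)) (mir r) (-x) n) = 0"
      by (simp only: hist_mir) (simp add: last_map hist_ne)
    then show ?thesis unfolding reacher_wins_def mir_mir by blast
  qed
  ultimately show ?thesis unfolding winning_def by blast
qed

lemma lose_pos:
  assumes "v0 \<in> V" "\<forall>u\<in>U. v0 + u \<ge> 0" "x > 0" shows "losing U V x"
proof -
  have "\<not> reacher_wins (\<lambda>h. v0) reach x" if "strategy_in U reach" for reach
  proof -
    have "last (hist (\<lambda>h. v0) reach x n) \<ge> x" for n
    proof (induction n)
      case (Suc n)
      let ?H = "hist (\<lambda>h. v0) reach x n"
      have "v0 + reach (?H @ [last ?H + v0]) \<ge> 0" using that assms(2) unfolding strategy_in_def by blast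
      then show ?case using Suc by (simp only: hist_Suc') simp
    qed simp
    then show ?thesis using assms(3) unfolding reacher_wins_def by (metis not_le)
  qed
  moreover have "strategy_in V (\<lambda>h. v0)" using assms(1) unfolding strategy_in_def by simp
  ultimately show ?thesis unfolding losing_def by blast
qed

lemma lose_neg:
  assumes "v0 \<in> V" "\<forall>u\<in>U. v0 + u \<le> 0" "x < 0" shows "losing U V x"
proof -
  have "\<not> reacher_wins (\<lambda>h. v0) reach x" if "strategy_in U reach" for reach
  proof -
    have "last (hist (\<lambda>h. v0) reach x n) \<le> x" for n
    proof (induction n)
      case (Suc n)
      let ?H = "hist (\<lambda>h. v0) reach x n"
      have "v0 + reach (?H @ [last ?H + v0]) \<le> 0" using that assms(2) unfolding strategy_in_def by blast
      then show ?case using Suc by (simp only: hist_Suc') simp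
    qed simp
    then show ?thesis using assms(3) unfolding reacher_wins_def by (metis not_le)
  qed
  moreover have "strategy_in V (\<lambda>h. v0)" using assms(1) unfolding strategy_in_def by simp
  ultimately show ?thesis unfolding losing_def by blast
qed

theorem proposition2:
  fixes U V :: "int set"
  assumes "finite U" "U \<noteq> {}" "finite V" "V \<noteq> {}"
  shows "(Max V \<ge> - Min U \<longrightarrow> (\<forall>x>0. losing U V x))
       \<and> (Min V \<le> - Max U \<longrightarrow> (\<forall>x<0. losing U V x))
       \<and> (Max U > - Min V \<and> (\<exists>B. \<forall>x>B. winning U V x) \<longrightarrow> (\<forall>x. winning U V x))
       \<and> (Min U < - Max V \<and> (\<exists>B. \<forall>x<B. winning U V x) \<longrightarrow> (\<forall>x. winning U V x))"
proof (intro conjI impI allI)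
  fix x :: int assume h: "Max V \<ge> - Min U" "x > 0"
  have "Max V \<in> V" using assms by simp
  moreover have "\<forall>u\<in>U. Max V + u \<ge> 0"
  proof
    fix u assume "u \<in> U" then have "Min U \<le> u" using assms by simp
    then show "Max V + u \<ge> 0" using h by simp
  qed
  ultimately show "losing U V x" using h(2) by (rule lose_pos)
next
  fix x :: int assume h: "Min V \<le> - Max U" "x < 0"
  have "Min V \<in> V" using assms by simp
  moreover have "\<forall>u\<in>U. Min V + u \<le> 0"
  proof
    fix u assume "u \<in> U" then have "u \<le> Max U" using assms by simp
    then show "Min V + u \<le> 0" using h by simp
  qed
  ultimately show "losing U V x" using h(2) by (rule lose_neg)
next
  fix x :: int assume h: "Max U > - Min V \<and> (\<exists>B. \<forall>x>B. winning U V x)"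
  then obtain B where "\<forall>x>B. winning U V x" by blast
  moreover have "\<forall>v\<in>V. v + Max U \<ge> 1" using h assms by (smt (verit) Min_le)
  ultimately show "winning U V x" using assms by (intro stitch[of "Max U"]) auto
next
  fix x :: int assume h: "Min U < - Max V \<and> (\<exists>B. \<forall>x<B. winning U V x)"
  then obtain B where B: "\<forall>x<B. winning U V x" by blast
  have "\<forall>y>-B. winning (uminus ` U) (uminus ` V) y"
  proof (intro allI impI)
    fix y :: int assume "y > -B"
    then have "winning U V (-y)" using B by simp
    then show "winning (uminus ` U) (uminus ` V) y" using win_mir by fastforce
  qed
  moreover have "\<forall>v\<in>uminus ` V. v + - Min U \<ge> 1" using h assms by (smt (verit) Max_ge imageE)
  moreover have "- Min U \<in> uminus ` U" using assms by simp
  ultimately have "winning (uminus ` U) (uminus ` V) (-x)" by (intro stitch) auto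
  then have "winning (uminus ` uminus ` U) (uminus ` uminus ` V) (- (- x))" by (rule win_mir)
  then show "winning U V x" by (simp add: image_image)
qed

end
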